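(* Let $J=\{m,\dots,m+l-1\}$ with $(J,1)\in\mathcal I$. Let: - $w=a_m(0)=\dots=a_{m+l-1}(0)$; - $c_i=x^{-1}(a_i-w)\in\mathbb C[[x]]$ for $i\in J$; - $\mu=\tfrac12\min_{i\notin J}|a_i(0)-w|$. Let $0<r'\le\varepsilon$ be such that $|a_i(z)-a_i(0)|<\mu$ for all $z\in B_{r'}$ and all $i$. Let $z_0\in B_{r'}^*$. Then the loop $t\mapsto(a_1(e(t)z_0),\dots,a_d(e(t)z_0))$, $t\in[0,1]$, in $Y_d$ is homotopic (relative to its basepoint) to the concatenation of the loop $\lambda_{J,1}$ followed by the loop $$t\mapsto\Big((a_i(e(t)z_0))_{1\le i\le m-1},\ (w+z_0c_i(e(t)z_0))_{m\le i\le m+l-1},\ (a_i(e(t)z_0))_{m+l\le i\le d}\Big).$$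
   Context: **Setting.** Let $d\ge2$ and let $a_1,\dots,a_d\in\mathbb C[[x]]$ be distinct power series with positive radii of convergence. Let $\varepsilon>0$ be such that each $a_i$ converges on the closure of $B_\varepsilon=\{|z|<\varepsilon\}$ and $a_i(z)\ne a_j(z)$ for $0<|z|<\varepsilon$, $i\ne j$. Write $B_\rho^*=\{0<|z|<\rho\}$ and $e(t)=e^{2\pi\sqrt{-1}t}$. **Configuration space.** $Y_d=\mathbb C^d\smallsetminus\bigcup_{i<j}\{z_i=z_j\}$ is the ordered configuration space. **Clusters.** Let $e_{i,j}=v_x(a_i-a_j)$. $\mathcal I$ is the set of pairs $(I,n)$ with $I\subseteq\{1,\dots,d\}$, $|I|\ge2$, and $n\ge1$, such that $e_{i,j}\ge n$ for all distinct $i,j\in I$ and $I$ is maximal with this property. Assume the ordering of the $a_i$ is such that for each $m$, the map $i\mapsto e_{m,i}$ on $\{m+1,\dots,d\}$ is weakly decreasing. With this ordering every $I$ with $(I,n)\in\mathcal I$ is an interval $\{m,\dots,m+l-1\}$. For $(I,n)\in\mathcal I$ with $I=\{m,\dots,m+l-1\}$: - $b_{I,n}$ is the common truncation $\sum_{k<n}c_kx^k$ of the $a_i$, $i\in I$; - $w_{I,n}=b_{I,n}(z_0)$; - $\lambda_{I,n}$ is the loop in $Y_d$ $$t\mapsto\big((a_i(z_0))_{i<m},\ (w_{I,n}+e(t)(a_i(z_0)-w_{I,n}))_{i\in I},\ (a_i(z_0))_{i\ge m+l}\big),\quad t\in[0,1].$$ *)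

theory Defs
  imports "HOL-Analysis.Analysis"
begin

definition ee :: "real \<Rightarrow> complex" where
  "ee t = exp (2 * of_real pi * \<i> * of_real t)"

text \<open>Ordered configuration space Y_d, realised inside nat => complex (product topology),
  coordinates 1..d, all other coordinates equal to 0.\<close>
definition confY :: "nat \<Rightarrow> (nat \<Rightarrow> complex) set" where
  "confY d = {z. (\<forall>i. i \<notin> {1..d} \<longrightarrow> z i = 0) \<and>
                 (\<forall>i\<in>{1..d}. \<forall>j\<in>{1..d}. i \<noteq> j \<longrightarrow> z i \<noteq> z j)}"

definition eval_ij :: "(nat \<Rightarrow> complex fps) \<Rightarrow> nat \<Rightarrow> nat \<Rightarrow> nat" where
  "eval_ij a i j = subdegree (a i - a j)"

definition is_cluster :: "(nat \<Rightarrow> complex fps) \<Rightarrow> nat \<Rightarrow> nat set \<Rightarrow> nat \<Rightarrow> bool" where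
  "is_cluster a d I n \<longleftrightarrow> I \<subseteq> {1..d} \<and> card I \<ge> 2 \<and> n \<ge> 1 \<and>
     (\<forall>i\<in>I. \<forall>j\<in>I. i \<noteq> j \<longrightarrow> eval_ij a i j \<ge> n) \<and>
     (\<forall>I'. I \<subseteq> I' \<and> I' \<subseteq> {1..d} \<and> (\<forall>i\<in>I'. \<forall>j\<in>I'. i \<noteq> j \<longrightarrow> eval_ij a i j \<ge> n)
           \<longrightarrow> I' = I)"

text \<open>b_{I,n}: common truncation sum_{k<n} c_k x^k, evaluated at z\<close>
definition cluster_b :: "(nat \<Rightarrow> complex fps) \<Rightarrow> nat set \<Rightarrow> nat \<Rightarrow> complex \<Rightarrow> complex" where
  "cluster_b a I n z = (\<Sum>k<n. fps_nth (a (Min I)) k * z ^ k)"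

definition cluster_loop ::
  "(nat \<Rightarrow> complex fps) \<Rightarrow> nat \<Rightarrow> nat set \<Rightarrow> nat \<Rightarrow> complex \<Rightarrow> real \<Rightarrow> nat \<Rightarrow> complex" where
  "cluster_loop a d I n z0 = (\<lambda>t i.
     if i \<in> I then cluster_b a I n z0 + ee t * (eval_fps (a i) z0 - cluster_b a I n z0)
     else if i \<in> {1..d} then eval_fps (a i) z0 else 0)"

end

theory Submission imports Defs begin

lemma eval_shift1:
  fixes f :: "complex fps"
  assumes "norm z < fps_conv_radius f"
  shows "eval_fps f z = fps_nth f 0 + z * eval_fps (fps_shift 1 f) z"
proof -
  have "(\<lambda>n. fps_nth (fps_shift 1 f) n * z ^ n) sums eval_fps (fps_shift 1 f) z"
    using assms by (intro sums_eval_fps) simp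
  hence "(\<lambda>n. z * (fps_nth (fps_shift 1 f) n * z ^ n)) sums (z * eval_fps (fps_shift 1 f) z)"
    by (rule sums_mult)
  hence "(\<lambda>n. fps_nth f (Suc n) * z ^ (Suc n)) sums (z * eval_fps (fps_shift 1 f) z)"
    by (simp add: mult_ac)
  hence "(\<lambda>n. fps_nth f n * z ^ n) sums (z * eval_fps (fps_shift 1 f) z + fps_nth f 0)"
    by (subst (asm) sums_Suc_iff) simp
  moreover have "(\<lambda>n. fps_nth f n * z ^ n) sums eval_fps f z"
    using assms by (rule sums_eval_fps)
  ultimately show ?thesis using sums_unique2 by (metis add.commute)
qed

lemma norm_ee [simp]: "norm (ee t) = 1"
  unfolding ee_def by (simp add: norm_exp_eq_Re)

lemma ee_0 [simp]: "ee 0 = 1" unfolding ee_def by simp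
lemma ee_1 [simp]: "ee 1 = 1" unfolding ee_def by (simp add: exp_two_pi_i)
lemma ee_nz [simp]: "ee t \<noteq> 0" unfolding ee_def by simp
lemma continuous_on_ee [continuous_intros]:
  "continuous_on S f \<Longrightarrow> continuous_on S (\<lambda>x. ee (f x))"
  unfolding ee_def by (intro continuous_intros)

theorem mainTheorem5:
  fixes d :: nat and a :: "nat \<Rightarrow> complex fps" and \<epsilon> r' :: real
    and m l :: nat and z0 :: complex
  assumes "d \<ge> 2"
    and distinct: "\<forall>i\<in>{1..d}. \<forall>j\<in>{1..d}. i \<noteq> j \<longrightarrow> a i \<noteq> a j"
    and radius: "\<forall>i\<in>{1..d}. fps_conv_radius (a i) > 0"
    and "\<epsilon> > 0"
    and conv: "\<forall>i\<in>{1..d}. \<forall>z. norm z \<le> \<epsilon> \<longrightarrow> summable (\<lambda>k. fps_nth (a i) k * z ^ k)"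
    and sep: "\<forall>i\<in>{1..d}. \<forall>j\<in>{1..d}. i \<noteq> j \<longrightarrow>
               (\<forall>z. 0 < norm z \<and> norm z < \<epsilon> \<longrightarrow> eval_fps (a i) z \<noteq> eval_fps (a j) z)"
    and order: "\<forall>k\<in>{1..d}. \<forall>i j. k < i \<and> i \<le> j \<and> j \<le> d \<longrightarrow> eval_ij a k j \<le> eval_ij a k i"
    and J: "is_cluster a d {m..m+l-1} 1"
    and r': "0 < r'" "r' \<le> \<epsilon>"
    and r'_mu: "\<forall>z. norm z < r' \<longrightarrow> (\<forall>i\<in>{1..d}. \<forall>k\<in>{1..d} - {m..m+l-1}.
                 cmod (eval_fps (a i) z - fps_nth (a i) 0) < cmod (fps_nth (a k) 0 - fps_nth (a m) 0) / 2)"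
    and z0: "0 < norm z0" "norm z0 < r'"
  shows "homotopic_paths (confY d)
           (\<lambda>t i. if i \<in> {1..d} then eval_fps (a i) (ee t * z0) else 0)
           (cluster_loop a d {m..m+l-1} 1 z0 +++
            (\<lambda>t i. if i \<in> {m..m+l-1}
                   then fps_nth (a m) 0 + z0 * eval_fps (fps_shift 1 (a i - fps_const (fps_nth (a m) 0))) (ee t * z0)
                   else if i \<in> {1..d} then eval_fps (a i) (ee t * z0) else 0))"
proof -
  define JJ where "JJ = {m..m+l-1}"
  define w where "w = fps_nth (a m) 0"
  define c where "c = (\<lambda>i. fps_shift 1 (a i - fps_const w))"
  define G where "G = (\<lambda>(u::real,v::real) i. if i \<in> JJ then w + ee u * z0 * eval_fps (c i) (ee v * z0)
                        else if i \<in> {1..d} then eval_fps (a i) (ee v * z0) else 0)"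
  have Jsub: "JJ \<subseteq> {1..d}" and Jcard: "card JJ \<ge> 2"
    and Jpair: "\<forall>i\<in>JJ. \<forall>j\<in>JJ. i \<noteq> j \<longrightarrow> eval_ij a i j \<ge> 1"
    using J unfolding is_cluster_def JJ_def by auto
  have "JJ \<noteq> {}" using Jcard by auto
  hence mJ: "m \<in> JJ" unfolding JJ_def by auto
  have minJ: "Min JJ = m" unfolding JJ_def using mJ[unfolded JJ_def]
    by (intro Min_eqI) auto
  have a0: "fps_nth (a i) 0 = w" if "i \<in> JJ" for i
  proof (cases "i = m")
    case False
    have "a i \<noteq> a m" using distinct Jsub that mJ False by blast
    hence ne: "a i - a m \<noteq> 0" by simp
    have "subdegree (a i - a m) \<ge> 1" using Jpair that mJ False unfolding eval_ij_def by auto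
    hence "fps_nth (a i - a m) 0 = 0" by (intro nth_less_subdegree_zero) auto
    thus ?thesis unfolding w_def by simp
  qed (simp add: w_def)
  have rad: "ereal \<epsilon> \<le> fps_conv_radius (a i)" if "i \<in> {1..d}" for i
  proof -
    have "summable (\<lambda>k. fps_nth (a i) k * (of_real \<epsilon>) ^ k)"
      using conv that \<open>\<epsilon> > 0\<close> by auto
    hence "conv_radius (fps_nth (a i)) \<ge> norm (of_real \<epsilon> :: complex)" by (rule conv_radius_geI)
    thus ?thesis using \<open>\<epsilon> > 0\<close> by (simp add: fps_conv_radius_def)
  qed
  have radc: "ereal \<epsilon> \<le> fps_conv_radius (c i)" if "i \<in> {1..d}" for i
  proof -
    have "min (fps_conv_radius (a i)) (fps_conv_radius (fps_const w)) \<le> fps_conv_radius (a i - fps_const w)"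
      by (rule fps_conv_radius_diff)
    thus ?thesis using rad[OF that] by (simp add: c_def)
  qed
  have nE: "norm (ee v * z0) = norm z0" for v by (simp add: norm_mult)
  have ltE: "ereal (norm z0) < ereal \<epsilon>" using z0 r' by simp
  have expand: "eval_fps (a i) \<zeta> = w + \<zeta> * eval_fps (c i) \<zeta>" if "i \<in> JJ" "norm \<zeta> = norm z0" for i \<zeta>
  proof -
    have i: "i \<in> {1..d}" using that Jsub by auto
    have r1: "norm \<zeta> < fps_conv_radius (a i)" using less_le_trans[OF ltE rad[OF i]] that by simp
    have r2: "norm \<zeta> < fps_conv_radius (a i - fps_const w)"
      using less_le_trans[OF ltE radc[OF i]] that by (simp add: c_def)
    have "eval_fps (a i - fps_const w) \<zeta> = eval_fps (a i) \<zeta> - w"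
      using r1 by (subst eval_fps_diff) auto
    moreover have "eval_fps (a i - fps_const w) \<zeta> = fps_nth (a i - fps_const w) 0 + \<zeta> * eval_fps (c i) \<zeta>"
      unfolding c_def by (rule eval_shift1[OF r2])
    ultimately show ?thesis using a0[OF that(1)] by simp
  qed
  have Gin: "G (u,v) \<in> confY d" for u v
  proof -
    let ?z = "ee v * z0"
    have nz: "norm ?z = norm z0" by (rule nE)
    have zpos: "0 < norm ?z" "norm ?z < \<epsilon>" "norm ?z < r'" using nz z0 r' by auto
    have close: "cmod (G (u,v) i - w) < cmod (fps_nth (a k) 0 - w) / 2"
      if "i \<in> JJ" "k \<in> {1..d} - JJ" for i k
    proof -
      have "cmod (G (u,v) i - w) = cmod z0 * cmod (eval_fps (c i) ?z)"
        using that by (simp add: G_def norm_mult)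
      also have "\<dots> = cmod (?z * eval_fps (c i) ?z)" by (simp add: norm_mult nz)
      also have "\<dots> = cmod (eval_fps (a i) ?z - fps_nth (a i) 0)"
        using expand[OF that(1) nz] a0[OF that(1)] by simp
      also have "\<dots> < cmod (fps_nth (a k) 0 - fps_nth (a m) 0) / 2"
        using r'_mu[rule_format, OF zpos(3), of i k] that Jsub unfolding JJ_def by auto
      finally show ?thesis by (simp add: w_def)
    qed
    have closek: "cmod (G (u,v) k - fps_nth (a k) 0) < cmod (fps_nth (a k) 0 - w) / 2"
      if "k \<in> {1..d} - JJ" for k
      using r'_mu[rule_format, OF zpos(3), of k k] that unfolding JJ_def G_def w_def by auto
    show ?thesis unfolding confY_def
    proof (intro CollectI conjI ballI allI impI)
      fix i assume "i \<notin> {1..d}" thus "G (u,v) i = 0" using Jsub by (auto simp: G_def)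
    next
      fix i j assume ij: "i \<in> {1..d}" "j \<in> {1..d}" "i \<noteq> j"
      show "G (u,v) i \<noteq> G (u,v) j"
      proof (cases "i \<in> JJ"; cases "j \<in> JJ")
        assume iJ: "i \<in> JJ" and jJ: "j \<in> JJ"
        have "eval_fps (a i) ?z \<noteq> eval_fps (a j) ?z" using sep ij zpos by blast
        hence "eval_fps (c i) ?z \<noteq> eval_fps (c j) ?z"
          using expand[OF iJ nz] expand[OF jJ nz] by auto
        thus ?thesis using iJ jJ z0 by (auto simp: G_def)
      next
        assume iJ: "i \<in> JJ" and jJ: "j \<notin> JJ"
        have eq: "fps_nth (a j) 0 - w = ((G (u,v) i - w) - (G (u,v) j - fps_nth (a j) 0)) - (G (u,v) i - G (u,v) j)"
          by simp
        have "cmod (fps_nth (a j) 0 - w) \<le> cmod ((G (u,v) i - w) - (G (u,v) j - fps_nth (a j) 0)) + cmod (G (u,v) i - G (u,v) j)"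
          unfolding eq by (rule norm_triangle_ineq4)
        moreover have "cmod ((G (u,v) i - w) - (G (u,v) j - fps_nth (a j) 0)) \<le> cmod (G (u,v) i - w) + cmod (G (u,v) j - fps_nth (a j) 0)"
          by (rule norm_triangle_ineq4)
        ultimately have "cmod (fps_nth (a j) 0 - w) \<le> cmod (G (u,v) i - w) + cmod (G (u,v) j - fps_nth (a j) 0) + cmod (G (u,v) i - G (u,v) j)"
          by linarith
        thus ?thesis using close[OF iJ, of j] closek[of j] ij jJ by auto
      next
        assume iJ: "i \<notin> JJ" and jJ: "j \<in> JJ"
        have eq: "fps_nth (a i) 0 - w = ((G (u,v) j - w) - (G (u,v) i - fps_nth (a i) 0)) - (G (u,v) j - G (u,v) i)"
          by simp
        have "cmod (fps_nth (a i) 0 - w) \<le> cmod ((G (u,v) j - w) - (G (u,v) i - fps_nth (a i) 0)) + cmod (G (u,v) j - G (u,v) i)"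
          unfolding eq by (rule norm_triangle_ineq4)
        moreover have "cmod ((G (u,v) j - w) - (G (u,v) i - fps_nth (a i) 0)) \<le> cmod (G (u,v) j - w) + cmod (G (u,v) i - fps_nth (a i) 0)"
          by (rule norm_triangle_ineq4)
        ultimately have "cmod (fps_nth (a i) 0 - w) \<le> cmod (G (u,v) j - w) + cmod (G (u,v) i - fps_nth (a i) 0) + cmod (G (u,v) j - G (u,v) i)"
          by linarith
        thus ?thesis using close[OF jJ, of i] closek[of i] ij iJ by auto
      next
        assume iJ: "i \<notin> JJ" and jJ: "j \<notin> JJ"
        thus ?thesis using sep ij zpos by (auto simp: G_def)
      qed
    qed
  qed
  have contG: "continuous_on UNIV G"
  proof (intro continuous_on_coordinatewise_then_product)
    fix i
    show "continuous_on UNIV (\<lambda>x. G x i)"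
    proof (cases "i \<in> JJ")
      case True
      hence i: "i \<in> {1..d}" using Jsub by auto
      have "continuous_on UNIV (\<lambda>x. w + ee (fst x) * z0 * eval_fps (c i) (ee (snd x) * z0))"
        by (intro continuous_intros continuous_on_eval_fps')
           (use less_le_trans[OF ltE radc[OF i]] in \<open>auto simp: nE\<close>)
      thus ?thesis using True by (simp add: G_def case_prod_unfold)
    next
      case False
      show ?thesis
      proof (cases "i \<in> {1..d}")
        case i: True
        have "continuous_on UNIV (\<lambda>x. eval_fps (a i) (ee (snd x) * z0))"
          by (intro continuous_intros continuous_on_eval_fps')
             (use less_le_trans[OF ltE rad[OF i]] in \<open>auto simp: nE\<close>)
        thus ?thesis using False i by (simp add: G_def case_prod_unfold)
      next
        case i: False
        have "(\<lambda>x. G x i) = (\<lambda>x. 0)" using False i by (auto simp: G_def case_prod_unfold)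
        thus ?thesis by (metis continuous_on_const)
      qed
    qed
  qed
  \<comment> \<open>homotopy in the square\<close>
  define p1 where "p1 = (\<lambda>t::real. (t,t))"
  define q1 where "q1 = (\<lambda>t::real. (t,0::real))"
  define q2 where "q2 = (\<lambda>t::real. (1::real,t))"
  have pq1: "path q1" "path q2" "path p1" unfolding p1_def q1_def q2_def path_def
    by (intro continuous_intros)+
  have "homotopic_paths UNIV p1 (q1 +++ q2)"
  proof (rule homotopic_paths_linear)
    show "path (q1 +++ q2)" using pq1 by (auto simp: q1_def q2_def pathstart_def pathfinish_def)
  qed (use pq1 in \<open>auto simp: p1_def q1_def q2_def pathstart_def pathfinish_def joinpaths_def\<close>)
  moreover have "G \<in> UNIV \<rightarrow> confY d" using Gin by auto
  ultimately have H: "homotopic_paths (confY d) (G \<circ> p1) ((G \<circ> q1) +++ (G \<circ> q2))"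
    using homotopic_paths_continuous_image[OF _ contG, of p1 "q1 +++ q2" "confY d"] Gin
    by (auto simp: path_compose_join)
  have e1: "G \<circ> p1 = (\<lambda>t i. if i \<in> {1..d} then eval_fps (a i) (ee t * z0) else 0)"
  proof (intro ext)
    fix t i
    show "(G \<circ> p1) t i = (if i \<in> {1..d} then eval_fps (a i) (ee t * z0) else 0)"
      using expand[of i "ee t * z0", OF _ nE] Jsub by (auto simp: G_def p1_def mult_ac)
  qed
  have e2: "G \<circ> q1 = cluster_loop a d {m..m+l-1} 1 z0"
  proof (intro ext)
    fix t i
    have cl: "cluster_loop a d JJ 1 z0 t i = (if i \<in> JJ then w + ee t * (eval_fps (a i) z0 - w)
               else if i \<in> {1..d} then eval_fps (a i) z0 else 0)"
      by (simp add: cluster_loop_def cluster_b_def minJ w_def)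
    have "(G \<circ> q1) t i = cluster_loop a d JJ 1 z0 t i"
    proof (cases "i \<in> JJ")
      case True
      show ?thesis unfolding cl using True expand[OF True, of z0] by (simp add: G_def q1_def algebra_simps)
    qed (unfold cl, simp add: G_def q1_def)
    thus "(G \<circ> q1) t i = cluster_loop a d {m..m+l-1} 1 z0 t i" by (simp add: JJ_def)
  qed
  have e3: "G \<circ> q2 = (\<lambda>t i. if i \<in> {m..m+l-1}
                   then fps_nth (a m) 0 + z0 * eval_fps (fps_shift 1 (a i - fps_const (fps_nth (a m) 0))) (ee t * z0)
                   else if i \<in> {1..d} then eval_fps (a i) (ee t * z0) else 0)"
    by (intro ext) (simp add: G_def q2_def JJ_def c_def w_def)
  show ?thesis using H unfolding e1 e2 e3 .
qed

end
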